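(* Assume the setting below and suppose $\tau=0$. Then (with probability one) the iterates $x_k$ converge to a limit $\bar x$ with $\bar x^{(1)}=0$.
   Context: Let $n\ge2$, $a\ge\sqrt{n-1}$, $f(x)=a|x^{(1)}|+\sum_{i=2}^n x^{(i)}$ on $\mathbb{R}^n$ ($x^{(i)}$ the $i$-th coordinate), $0<c_1<c_2<1$, and $\tau=c_1+\frac{(n-1)(c_1-1)}{a^2}$. The initial point $x_0$ is drawn from the normal distribution on $\mathbb{R}^n$ (independently of $a$), and $x_{k+1}=x_k+t_kd_k$, $d_k=-\nabla f(x_k)$, where $t_k$ is returned by the following Armijo–Wolfe bracketing line search: set $\alpha=0$, $\beta=+\infty$, $t=1$; repeat: if $A(t)$ fails set $\beta\leftarrow t$; else if $W(t)$ fails set $\alpha\leftarrow t$; else stop and return $t$; then if $\beta<+\infty$ set $t\leftarrow(\alpha+\beta)/2$, otherwise $t\leftarrow2\alpha$. Here $A(t)$: $f(x_k+td_k)\le f(x_k)+c_1t\nabla f(x_k)^Td_k$, and $W(t)$: $f$ is differentiable at $x_k+td_k$ and $\nabla f(x_k+td_k)^Td_k\ge c_2\nabla f(x_k)^Td_k$. All statements are understood to hold with probability one. *)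

theory Defs
  imports "HOL-Analysis.Analysis" "HOL-Probability.Probability"
begin

text \<open>The objective: f(x) = a |x_j| + sum of the other coordinates, where j is the
  distinguished ("first") coordinate of R^n = real^'n.\<close>
definition fobj :: "real \<Rightarrow> 'n::finite \<Rightarrow> real^'n \<Rightarrow> real" where
  "fobj a j x = a * \<bar>x $ j\<bar> + (\<Sum>i\<in>UNIV - {j}. x $ i)"

definition grad :: "(real^'n \<Rightarrow> real) \<Rightarrow> real^'n \<Rightarrow> real^'n" where
  "grad f x = (THE g. (f has_derivative (\<lambda>h. g \<bullet> h)) (at x))"

definition armijo :: "(real^'n \<Rightarrow> real) \<Rightarrow> real \<Rightarrow> real^'n \<Rightarrow> real^'n \<Rightarrow> real \<Rightarrow> bool" where
  "armijo f c1 x d t \<longleftrightarrow> f (x + t *\<^sub>R d) \<le> f x + c1 * t * (grad f x \<bullet> d)"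

definition wolfe :: "(real^'n \<Rightarrow> real) \<Rightarrow> real \<Rightarrow> real^'n \<Rightarrow> real^'n \<Rightarrow> real \<Rightarrow> bool" where
  "wolfe f c2 x d t \<longleftrightarrow> f differentiable (at (x + t *\<^sub>R d)) \<and>
      grad f (x + t *\<^sub>R d) \<bullet> d \<ge> c2 * (grad f x \<bullet> d)"

text \<open>One pass of the bracketing loop on the state (alpha, beta, t), beta = \<infinity> allowed.
  (Only applied while the stopping test fails.)\<close>
definition ls_step :: "(real^'n \<Rightarrow> real) \<Rightarrow> real \<Rightarrow> real \<Rightarrow> real^'n \<Rightarrow> real^'n \<Rightarrow>
    real \<times> ereal \<times> real \<Rightarrow> real \<times> ereal \<times> real" where
  "ls_step f c1 c2 x d s =
    (let (\<alpha>, \<beta>, t) = s;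
         (\<alpha>', \<beta>') = (if \<not> armijo f c1 x d t then (\<alpha>, ereal t)
                      else if \<not> wolfe f c2 x d t then (t, \<beta>)
                      else (\<alpha>, \<beta>));
         t' = (if \<beta>' < \<infinity> then (\<alpha>' + real_of_ereal \<beta>') / 2 else 2 * \<alpha>')
     in (\<alpha>', \<beta>', t'))"

definition ls_state :: "(real^'n \<Rightarrow> real) \<Rightarrow> real \<Rightarrow> real \<Rightarrow> real^'n \<Rightarrow> real^'n \<Rightarrow>
    nat \<Rightarrow> real \<times> ereal \<times> real" where
  "ls_state f c1 c2 x d m = (ls_step f c1 c2 x d ^^ m) (0, \<infinity>, 1)"

definition ls_trial :: "(real^'n \<Rightarrow> real) \<Rightarrow> real \<Rightarrow> real \<Rightarrow> real^'n \<Rightarrow> real^'n \<Rightarrow> nat \<Rightarrow> real" where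
  "ls_trial f c1 c2 x d m = snd (snd (ls_state f c1 c2 x d m))"

definition ls_terminates :: "(real^'n \<Rightarrow> real) \<Rightarrow> real \<Rightarrow> real \<Rightarrow> real^'n \<Rightarrow> real^'n \<Rightarrow> bool" where
  "ls_terminates f c1 c2 x d \<longleftrightarrow>
     (\<exists>m. armijo f c1 x d (ls_trial f c1 c2 x d m) \<and> wolfe f c2 x d (ls_trial f c1 c2 x d m))"

definition ls_result :: "(real^'n \<Rightarrow> real) \<Rightarrow> real \<Rightarrow> real \<Rightarrow> real^'n \<Rightarrow> real^'n \<Rightarrow> real" where
  "ls_result f c1 c2 x d = ls_trial f c1 c2 x d
     (LEAST m. armijo f c1 x d (ls_trial f c1 c2 x d m) \<and> wolfe f c2 x d (ls_trial f c1 c2 x d m))"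

primrec gd_iter :: "(real^'n \<Rightarrow> real) \<Rightarrow> real \<Rightarrow> real \<Rightarrow> real^'n \<Rightarrow> nat \<Rightarrow> real^'n" where
  "gd_iter f c1 c2 x0 0 = x0"
| "gd_iter f c1 c2 x0 (Suc k) =
     (let x = gd_iter f c1 c2 x0 k; d = - grad f x in x + ls_result f c1 c2 x d *\<^sub>R d)"

definition std_gaussian :: "(real^'n::finite) measure" where
  "std_gaussian = density lborel (\<lambda>x. ennreal (\<Prod>i\<in>UNIV. std_normal_density (x $ i)))"

end

theory Submission
  imports Defs
begin


definition Gv :: "real \<Rightarrow> 'n::finite \<Rightarrow> real^'n \<Rightarrow> real^'n" where
  "Gv a j x = (\<chi> i. if i = j then a * sgn (x $ j) else 1)"

lemma inner_split:
  fixes j :: "'n::finite"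
  shows "v \<bullet> w = v $ j * w $ j + (\<Sum>i\<in>UNIV - {j}. v $ i * w $ i)"
  unfolding inner_vec_def by (simp add: sum.remove[of UNIV j])

lemma Gv_inner: "Gv a j x \<bullet> y = a * sgn (x $ j) * y $ j + (\<Sum>i\<in>UNIV - {j}. y $ i)"
  by (simp add: inner_split[of _ _ j] Gv_def)

lemma fobj_deriv:
  fixes j :: "'n::finite"
  assumes "x $ j \<noteq> 0"
  shows "(fobj a j has_derivative (\<lambda>h. Gv a j x \<bullet> h)) (at x)"
proof -
  let ?S = "{y::real^'n. 0 < sgn (x $ j) * y $ j}"
  have op: "open ?S"
    by (intro open_Collect_less continuous_intros)
  have xs: "x \<in> ?S" using assms by (simp add: sgn_mult_self_eq abs_sgn[symmetric] mult.commute) 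
  have eq: "Gv a j x \<bullet> y = fobj a j y" if "y \<in> ?S" for y
  proof -
    have "\<bar>y $ j\<bar> = sgn (x $ j) * y $ j" using that
      by (cases "x $ j > 0") (auto simp: sgn_if abs_if split: if_splits)
    then show ?thesis by (simp add: Gv_inner fobj_def)
  qed
  have "((\<lambda>y. Gv a j x \<bullet> y) has_derivative (\<lambda>h. Gv a j x \<bullet> h)) (at x)"
    by (rule bounded_linear_imp_has_derivative) (rule bounded_linear_inner_right)
  then show ?thesis
    by (rule has_derivative_transform_within_open[OF _ op xs]) (use eq in auto)
qed

lemma grad_fobj:
  fixes j :: "'n::finite"
  assumes "x $ j \<noteq> 0"
  shows "grad (fobj a j) x = Gv a j x"
  unfolding grad_def
proof (rule the_equality)
  show "(fobj a j has_derivative (\<lambda>h. Gv a j x \<bullet> h)) (at x)" by (rule fobj_deriv[OF assms])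
next
  fix g assume "(fobj a j has_derivative (\<lambda>h. g \<bullet> h)) (at x)"
  from has_derivative_unique[OF this fobj_deriv[OF assms]]
  have "\<And>h. g \<bullet> h = Gv a j x \<bullet> h" by metis
  then have "(g - Gv a j x) \<bullet> (g - Gv a j x) = 0"
    by (simp only: inner_diff_left)
  then show "g = Gv a j x" by simp
qed

lemma fobj_diff: "x $ j \<noteq> 0 \<Longrightarrow> fobj a j differentiable (at x)"
  using fobj_deriv unfolding differentiable_def by blast



lemma card_minus_j: "real (card (UNIV - {j::'n::finite})) = real CARD('n) - 1"
proof -
  have "CARD('n) \<ge> 1" by (simp add: Suc_leI)
  then show ?thesis by (simp add: card_Diff_singleton of_nat_diff)
qed

lemma line_j:
  fixes j :: "'n::finite"
  shows "(x - t *\<^sub>R Gv a j x) $ j = sgn (x $ j) * (\<bar>x $ j\<bar> - t * a)"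
  by (simp add: Gv_def algebra_simps sgn_if abs_if)

lemma line_f:
  fixes j :: "'n::finite"
  assumes "x $ j \<noteq> 0"
  shows "fobj a j (x - t *\<^sub>R Gv a j x) =
     a * \<bar>\<bar>x $ j\<bar> - t * a\<bar> + (\<Sum>i\<in>UNIV - {j}. x $ i) - t * (real CARD('n) - 1)"
proof -
  have "(\<Sum>i\<in>UNIV - {j}. (x - t *\<^sub>R Gv a j x) $ i) = (\<Sum>i\<in>UNIV - {j}. x $ i - t)"
    by (intro sum.cong) (auto simp: Gv_def)
  also have "\<dots> = (\<Sum>i\<in>UNIV - {j}. x $ i) - t * (real CARD('n) - 1)"
    by (simp add: sum_subtractf card_minus_j)
  finally show ?thesis
    unfolding fobj_def line_j using assms by (simp add: abs_mult abs_sgn_eq)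
qed

lemma Gv_Gv:
  fixes j :: "'n::finite"
  assumes "x $ j \<noteq> 0"
  shows "Gv a j y \<bullet> Gv a j x = a * a * sgn (y $ j) * sgn (x $ j) + (real CARD('n) - 1)"
  using assms by (simp add: Gv_inner card_minus_j) (simp add: Gv_def)



lemma Gv_self:
  fixes j :: "'n::finite"
  assumes "x $ j \<noteq> 0"
  shows "Gv a j x \<bullet> Gv a j x = a * a + (real CARD('n) - 1)"
  using Gv_Gv[OF assms, of a x] assms by (simp add: sgn_mult[symmetric] sgn_if)

lemma aux_mult: "g = - K \<Longrightarrow> c1 * t * g = - t * (c1 * K)" for g K c1 t :: real
  by simp

lemma armijo_char:
  fixes j :: "'n::finite"
  assumes a: "a > 0" and c1: "c1 * (a * a + (real CARD('n) - 1)) = real CARD('n) - 1"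
    and u: "x $ j \<noteq> 0" and t: "t \<ge> 0"
  shows "armijo (fobj a j) c1 x (- grad (fobj a j) x) t \<longleftrightarrow> t * a \<le> 2 * \<bar>x $ j\<bar>"
proof -
  let ?N = "real CARD('n) - 1" and ?S = "\<Sum>i\<in>UNIV - {j}. x $ i" and ?u = "\<bar>x $ j\<bar>"
  have fx: "fobj a j x = a * ?u + ?S" by (simp add: fobj_def)
  have "Gv a j x \<bullet> - Gv a j x = - (a * a + ?N)"
    using Gv_self[OF u, of a] by (simp only: inner_minus_right)
  then have "c1 * t * (Gv a j x \<bullet> - Gv a j x) = - t * (c1 * (a * a + ?N))"
    by (rule aux_mult)
  then have e: "c1 * t * (Gv a j x \<bullet> - Gv a j x) = - t * ?N" using c1 by simp
  have "armijo (fobj a j) c1 x (- grad (fobj a j) x) t \<longleftrightarrow>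
        a * \<bar>?u - t * a\<bar> + ?S - t * ?N \<le> a * ?u + ?S + - t * ?N"
    unfolding armijo_def grad_fobj[OF u] e fx line_f[OF u, of a t, symmetric]
    by (simp only: diff_conv_add_uminus scaleR_minus_left scaleR_minus_right)
  also have "\<dots> \<longleftrightarrow> \<bar>?u - t * a\<bar> \<le> ?u" using a by simp
  also have "\<dots> \<longleftrightarrow> t * a \<le> 2 * ?u" using a t by (auto simp: abs_if)
  finally show ?thesis .
qed

lemma wolfe_char:
  fixes j :: "'n::finite"
  assumes a: "a > 0" and aN: "a * a \<ge> real CARD('n) - 1" and c2: "0 < c2" "c2 < 1"
    and u: "x $ j \<noteq> 0" and t: "t \<ge> 0" and ne: "t * a \<noteq> \<bar>x $ j\<bar>"
  shows "wolfe (fobj a j) c2 x (- grad (fobj a j) x) t \<longleftrightarrow> \<bar>x $ j\<bar> < t * a"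
proof -
  let ?N = "real CARD('n) - 1" and ?u = "\<bar>x $ j\<bar>"
  let ?y = "x - t *\<^sub>R Gv a j x"
  have N: "?N \<ge> 0" by (simp add: Suc_leI)
  have yj: "?y $ j = sgn (x $ j) * (?u - t * a)" by (rule line_j)
  have y0: "?y $ j \<noteq> 0" using yj u ne by (simp add: sgn_if)
  have ss: "sgn (?y $ j) * sgn (x $ j) = sgn (?u - t * a)"
    using u unfolding yj by (simp add: sgn_mult sgn_if)
  have gy: "Gv a j ?y \<bullet> - Gv a j x = - (a * a * sgn (?u - t * a) + ?N)"
    using Gv_Gv[OF u, of a ?y] ss by (simp add: mult.assoc)
  have gx: "Gv a j x \<bullet> - Gv a j x = - (a * a + ?N)"
    using Gv_self[OF u, of a] by simp
  have "wolfe (fobj a j) c2 x (- grad (fobj a j) x) t \<longleftrightarrow>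
        - (a * a * sgn (?u - t * a) + ?N) \<ge> c2 * (- (a * a + ?N))"
    unfolding wolfe_def grad_fobj[OF u] using fobj_diff[OF y0] grad_fobj[OF y0] gy gx
    by simp
  also have "\<dots> \<longleftrightarrow> ?u < t * a"
  proof (cases "?u < t * a")
    case True
    then have s: "sgn (?u - t * a) = -1" by simp
    moreover have "c2 * (a * a + ?N) \<ge> 0" using c2 N by simp
    ultimately have "c2 * (- (a * a + ?N)) \<le> - (a * a * sgn (?u - t * a) + ?N)"
      unfolding mult_minus_right s using aN by linarith
    then show ?thesis using True by simp
  next
    case False
    then have s: "sgn (?u - t * a) = 1" using ne by simp
    moreover have "c2 * (a * a + ?N) < a * a + ?N" using c2 N a
      by (simp add: mult_less_cancel_right1 add_pos_nonneg)
    ultimately have "\<not> c2 * (- (a * a + ?N)) \<le> - (a * a * sgn (?u - t * a) + ?N)"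
      unfolding mult_minus_right s by linarith
    then show ?thesis using False by simp
  qed
  finally show ?thesis .
qed



lemma ls_state_0: "ls_state f c1 c2 x d 0 = (0, \<infinity>, 1)"
  by (simp add: ls_state_def)

lemma ls_state_Suc: "ls_state f c1 c2 x d (Suc m) = ls_step f c1 c2 x d (ls_state f c1 c2 x d m)"
  by (simp add: ls_state_def)

lemma step_Afail: "\<not> armijo f c1 x d t \<Longrightarrow> ls_step f c1 c2 x d (\<alpha>, \<beta>, t) = (\<alpha>, ereal t, (\<alpha> + t) / 2)"
  by (simp add: ls_step_def)

lemma step_Wfail: "armijo f c1 x d t \<Longrightarrow> \<not> wolfe f c2 x d t \<Longrightarrow>
   ls_step f c1 c2 x d (\<alpha>, \<infinity>, t) = (t, \<infinity>, 2 * t)"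
  by (simp add: ls_step_def)

lemma ls_main:
  assumes r: "r > 0" "r \<notin> \<rat>"
    and HA: "\<And>t. t \<in> \<rat> \<Longrightarrow> t > 0 \<Longrightarrow> armijo f c1 x d t \<longleftrightarrow> t \<le> 2 * r"
    and HW: "\<And>t. t \<in> \<rat> \<Longrightarrow> t > 0 \<Longrightarrow> wolfe f c2 x d t \<longleftrightarrow> r < t"
  shows "ls_terminates f c1 c2 x d \<and> (\<exists>e::int. ls_result f c1 c2 x d = 2 powr e) \<and>
         r < ls_result f c1 c2 x d \<and> ls_result f c1 c2 x d < 2 * r \<and> ls_result f c1 c2 x d \<in> \<rat>"
proof -
  let ?A = "armijo f c1 x d" and ?W = "wolfe f c2 x d" and ?tr = "ls_trial f c1 c2 x d"
  have neq: "t \<noteq> r" "t \<noteq> 2 * r" if "t \<in> \<rat>" for t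
  proof -
    show "t \<noteq> r" using that r by auto
    show "t \<noteq> 2 * r"
    proof
      assume "t = 2 * r"
      then have "r = t / 2" by simp
      with that r show False by simp
    qed
  qed
  have generic: "ls_terminates f c1 c2 x d \<and> ls_result f c1 c2 x d = ?tr K"
    if AW: "?A (?tr K) \<and> ?W (?tr K)" and no: "\<And>m. m < K \<Longrightarrow> \<not> (?A (?tr m) \<and> ?W (?tr m))" for K
  proof -
    have "(LEAST m. ?A (?tr m) \<and> ?W (?tr m)) = K"
      by (rule Least_equality) (use AW no not_less in blast)+
    then show ?thesis using AW unfolding ls_terminates_def ls_result_def by auto
  qed
  show ?thesis
  proof (cases "1 < 2 * r")
    case True
    have ex: "\<exists>K::nat. r < 2 ^ K" by (rule real_arch_pow) simp
    define K where "K = (LEAST K::nat. r < 2 ^ K)"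
    have rK: "r < 2 ^ K" unfolding K_def by (rule LeastI_ex[OF ex])
    have below: "(2::real) ^ m < r" if "m < K" for m
    proof -
      have "\<not> r < 2 ^ m" using not_less_Least[OF that[unfolded K_def]] .
      moreover have "(2::real) ^ m \<in> \<rat>" by simp
      ultimately show ?thesis using neq[of "2 ^ m"] by linarith
    qed
    have st: "m \<le> K \<Longrightarrow> \<exists>\<alpha>. ls_state f c1 c2 x d m = (\<alpha>, \<infinity>, 2 ^ m)" for m
    proof (induction m)
      case 0 then show ?case by (simp add: ls_state_0)
    next
      case (Suc m)
      then obtain \<alpha> where e: "ls_state f c1 c2 x d m = (\<alpha>, \<infinity>, 2 ^ m)" by auto
      have lt: "(2::real) ^ m < r" using Suc.prems by (intro below) simp
      have A: "?A (2 ^ m)" using HA[of "2 ^ m"] lt r by simp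
      have W: "\<not> ?W (2 ^ m)" using HW[of "2 ^ m"] lt by simp
      show ?case unfolding ls_state_Suc e step_Wfail[OF A W] by simp
    qed
    have tr: "m \<le> K \<Longrightarrow> ?tr m = 2 ^ m" for m
      using st[of m] unfolding ls_trial_def by auto
    have up: "(2::real) ^ K \<le> 2 * r"
    proof (cases K)
      case 0 then show ?thesis using True by simp
    next
      case (Suc K')
      then have "(2::real) ^ K' < r" using below[of K'] by simp
      then show ?thesis using Suc by simp
    qed
    have AW: "?A (?tr K) \<and> ?W (?tr K)" using HA[of "2 ^ K"] HW[of "2 ^ K"] tr[of K] up rK by simp
    have no: "\<not> (?A (?tr m) \<and> ?W (?tr m))" if "m < K" for m
      using HW[of "2 ^ m"] tr[of m] below[OF that] that by simp
    from generic[OF AW no] have g: "ls_terminates f c1 c2 x d \<and> ls_result f c1 c2 x d = 2 ^ K" 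
      using tr[of K] by simp
    have lt: "(2::real) ^ K < 2 * r" using up neq[of "2 ^ K"] by simp
    have e: "ls_result f c1 c2 x d = 2 powr (of_int (int K))"
      using g by (simp add: powr_realpow)
    have q: "ls_result f c1 c2 x d \<in> \<rat>" using g by simp
    show ?thesis
      apply (intro conjI)
      using g apply blast
      using e apply blast
      using g rK lt q by auto
  next
    case False
    then have r2: "2 * r < 1" using neq[of 1] by simp
    have ex: "\<exists>K::nat. 1 / 2 ^ K < 2 * r"
    proof -
      obtain n where "1 / (2 * r) < 2 ^ n" using real_arch_pow[of 2 "1 / (2 * r)"] by auto
      then have "1 / 2 ^ n < 2 * r" using r by (simp add: field_simps)
      then show ?thesis by blast
    qed
    define K where "K = (LEAST K::nat. 1 / 2 ^ K < 2 * r)"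
    have rK: "1 / 2 ^ K < 2 * r" unfolding K_def by (rule LeastI_ex[OF ex])
    have above: "2 * r < 1 / (2::real) ^ m" if "m < K" for m
    proof -
      have "\<not> 1 / 2 ^ m < 2 * r" using not_less_Least[OF that[unfolded K_def]] .
      moreover have "1 / (2::real) ^ m \<in> \<rat>" by simp
      ultimately show ?thesis using neq[of "1 / 2 ^ m"] by linarith
    qed
    have K0: "K \<noteq> 0" using rK r2 by (cases K) auto
    have st: "1 \<le> m \<Longrightarrow> m \<le> K \<Longrightarrow> ls_state f c1 c2 x d m = (0, ereal (1 / 2 ^ (m - 1)), 1 / 2 ^ m)" for m
    proof (induction m)
      case 0 then show ?case by simp
    next
      case (Suc m)
      show ?case
      proof (cases m)
        case 0
        have A: "\<not> ?A 1" using HA[of 1] r2 by simp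
        show ?thesis unfolding 0 ls_state_Suc ls_state_0 step_Afail[OF A] by simp
      next
        case (Suc m')
        then have e: "ls_state f c1 c2 x d m = (0, ereal (1 / 2 ^ (m - 1)), 1 / 2 ^ m)"
          using Suc.IH Suc.prems by simp
        have gt: "2 * r < 1 / (2::real) ^ m" using Suc.prems by (intro above) simp
        have A: "\<not> ?A (1 / 2 ^ m)" using HA[of "1 / 2 ^ m"] gt by simp
        show ?thesis unfolding ls_state_Suc e step_Afail[OF A] using Suc by simp
      qed
    qed
    have tr: "m \<le> K \<Longrightarrow> ?tr m = 1 / 2 ^ m" for m
      using st[of m] unfolding ls_trial_def by (cases m) (auto simp: ls_state_0)
    have lo: "r < 1 / (2::real) ^ K"
    proof -
      obtain K' where K': "K = Suc K'" using K0 by (cases K) auto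
      have "2 * r < 1 / (2::real) ^ K'" using above[of K'] K' by simp
      then show ?thesis using K' by (simp add: field_simps)
    qed
    have AW: "?A (?tr K) \<and> ?W (?tr K)" using HA[of "1 / 2 ^ K"] HW[of "1 / 2 ^ K"] tr[of K] lo rK by simp
    have no: "\<not> (?A (?tr m) \<and> ?W (?tr m))" if "m < K" for m
      using HA[of "1 / 2 ^ m"] tr[of m] above[OF that] that by simp
    from generic[OF AW no] have g: "ls_terminates f c1 c2 x d \<and> ls_result f c1 c2 x d = 1 / 2 ^ K" 
      using tr[of K] by simp
    have e: "ls_result f c1 c2 x d = 2 powr (of_int (- int K))"
      using g by (simp add: powr_minus_divide powr_realpow)
    have q: "ls_result f c1 c2 x d \<in> \<rat>" using g by simp
    show ?thesis
      apply (intro conjI)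
      using g apply blast
      using e apply blast
      using g rK lo q by auto
  qed
qed



lemma one_step:
  fixes j :: "'n::finite"
  assumes a: "a > 0" and c1: "c1 * (a * a + (real CARD('n) - 1)) = real CARD('n) - 1"
    and aN: "a * a \<ge> real CARD('n) - 1" and c2: "0 < c2" "c2 < 1"
    and rq: "\<bar>x $ j\<bar> / a \<notin> \<rat>"
  defines "t \<equiv> ls_result (fobj a j) c1 c2 x (- grad (fobj a j) x)"
  shows "fobj a j differentiable (at x) \<and> ls_terminates (fobj a j) c1 c2 x (- grad (fobj a j) x) \<and>
     (\<exists>e::int. t = 2 powr e) \<and> \<bar>x $ j\<bar> / a < t \<and> t < 2 * (\<bar>x $ j\<bar> / a) \<and> t \<in> \<rat> \<and>
     \<bar>(x + t *\<^sub>R (- grad (fobj a j) x)) $ j\<bar> / a = t - \<bar>x $ j\<bar> / a \<and>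
     norm ((x + t *\<^sub>R (- grad (fobj a j) x)) - x) = t * sqrt (a * a + (real CARD('n) - 1))"
proof -
  let ?r = "\<bar>x $ j\<bar> / a"
  have u: "x $ j \<noteq> 0" using rq by auto
  have r0: "?r > 0" using u a by simp
  have HA: "armijo (fobj a j) c1 x (- grad (fobj a j) x) s \<longleftrightarrow> s \<le> 2 * ?r" if "s \<in> \<rat>" "s > 0" for s
    using armijo_char[OF a c1 u, of s] that a by (simp add: field_simps)
  have HW: "wolfe (fobj a j) c2 x (- grad (fobj a j) x) s \<longleftrightarrow> ?r < s" if "s \<in> \<rat>" "s > 0" for s
  proof -
    have "s \<noteq> ?r" using that rq by auto
    then have "s * a \<noteq> \<bar>x $ j\<bar>" using a by (auto simp: field_simps)
    then show ?thesis using wolfe_char[OF a aN c2 u, of s] that a by (simp add: field_simps)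
  qed
  from ls_main[OF r0 rq HA HW] have L: "ls_terminates (fobj a j) c1 c2 x (- grad (fobj a j) x) \<and>
     (\<exists>e::int. t = 2 powr e) \<and> ?r < t \<and> t < 2 * ?r \<and> t \<in> \<rat>"
    unfolding t_def by blast
  have yj: "(x + t *\<^sub>R (- grad (fobj a j) x)) $ j = sgn (x $ j) * (\<bar>x $ j\<bar> - t * a)"
    using line_j[of x t a j] unfolding grad_fobj[OF u] by simp
  have "t * a > \<bar>x $ j\<bar>" using L a by (simp add: field_simps)
  then have "\<bar>(x + t *\<^sub>R (- grad (fobj a j) x)) $ j\<bar> = t * a - \<bar>x $ j\<bar>"
    unfolding yj using u by (simp add: abs_mult abs_sgn_eq)
  then have Y: "\<bar>(x + t *\<^sub>R (- grad (fobj a j) x)) $ j\<bar> / a = t - ?r"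
    using a by (simp add: field_simps)
  have t0: "t \<ge> 0" using L r0 by linarith
  have "norm ((x + t *\<^sub>R (- grad (fobj a j) x)) - x) = t * norm (Gv a j x)"
    using t0 unfolding grad_fobj[OF u] by simp
  also have "norm (Gv a j x) = sqrt (a * a + (real CARD('n) - 1))"
    unfolding norm_eq_sqrt_inner Gv_self[OF u] ..
  finally show ?thesis using L Y fobj_diff[OF u] by blast
qed



lemma ae_part:
  fixes j :: "'n::finite" and a :: real
  shows "AE x0 in (std_gaussian :: (real^'n) measure). \<forall>q::rat. x0 $ j \<noteq> a * of_rat q"
proof -
  have m: "(\<lambda>x::real^'n. ennreal (\<Prod>i\<in>UNIV. std_normal_density (x $ i))) \<in> borel_measurable lborel"
    by measurable
  have "AE x in (lborel :: (real^'n) measure). \<forall>q::rat. x $ j \<noteq> a * of_rat q"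
  proof (subst AE_all_countable, intro allI)
    fix q :: rat
    have "axis j (1::real) \<in> Basis" by simp
    from AE_lborel_inner_neq[OF this, of "a * of_rat q"]
    show "AE x in (lborel :: (real^'n) measure). x $ j \<noteq> a * of_rat q"
      by (simp add: cart_eq_inner_axis)
  qed
  then show ?thesis unfolding std_gaussian_def
    by (subst AE_density[OF m]) auto
qed

lemma det_part:
  fixes j :: "'n::finite"
  assumes a: "a > 0" and c1: "c1 * (a * a + (real CARD('n) - 1)) = real CARD('n) - 1"
    and aN: "a * a \<ge> real CARD('n) - 1" and c2: "0 < c2" "c2 < 1"
    and x0: "\<forall>q::rat. x0 $ j \<noteq> a * of_rat q"
  shows "(\<forall>k. fobj a j differentiable (at (gd_iter (fobj a j) c1 c2 x0 k)) \<and>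
                ls_terminates (fobj a j) c1 c2 (gd_iter (fobj a j) c1 c2 x0 k)
                   (- grad (fobj a j) (gd_iter (fobj a j) c1 c2 x0 k))) \<and>
           (\<exists>xbar. gd_iter (fobj a j) c1 c2 x0 \<longlonglongrightarrow> xbar \<and> xbar $ j = 0)"
proof -
  define X where "X = gd_iter (fobj a j) c1 c2 x0"
  define T where "T k = ls_result (fobj a j) c1 c2 (X k) (- grad (fobj a j) (X k))" for k
  define R where "R k = \<bar>X k $ j\<bar> / a" for k
  define B where "B = sqrt (a * a + (real CARD('n) - 1))"
  have XS: "X (Suc k) = X k + T k *\<^sub>R (- grad (fobj a j) (X k))" for k
    by (simp add: X_def T_def Let_def)
  have OS: "R k \<notin> \<rat> \<Longrightarrow> fobj a j differentiable (at (X k)) \<and> ls_terminates (fobj a j) c1 c2 (X k) (- grad (fobj a j) (X k)) \<and>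
     (\<exists>e::int. T k = 2 powr e) \<and> R k < T k \<and> T k < 2 * R k \<and> T k \<in> \<rat> \<and>
     R (Suc k) = T k - R k \<and> norm (X (Suc k) - X k) = T k * B" for k
    using one_step[OF a c1 aN c2, of "X k" j] unfolding R_def T_def B_def XS by blast
  have RQ: "R k \<notin> \<rat>" for k
  proof (induction k)
    case 0
    show ?case
    proof
      assume "R 0 \<in> \<rat>"
      then obtain q where q: "R 0 = of_rat q" by (auto elim: Rats_cases)
      then have "\<bar>x0 $ j\<bar> = a * of_rat q" using a by (simp add: R_def X_def field_simps)
      then have "x0 $ j = a * of_rat q \<or> x0 $ j = a * of_rat (- q)" by (cases "x0 $ j < 0") (auto simp: of_rat_minus)
      with x0 show False by blast
    qed
  next
    case (Suc k)
    from OS[OF Suc] have e: "R (Suc k) = T k - R k" and tq: "T k \<in> \<rat>" by auto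
    show ?case
    proof
      assume "R (Suc k) \<in> \<rat>"
      then have "T k - R (Suc k) \<in> \<rat>" using tq by simp
      with e Suc show False by simp
    qed
  qed
  note O = OS[OF RQ]
  have O1: "R k < T k" "T k < 2 * R k" "R (Suc k) = T k - R k" "norm (X (Suc k) - X k) = T k * B" for k
    using O[of k] by blast+
  have "\<forall>k. \<exists>e::int. T k = 2 powr e" using O by blast
  from choice[OF this] obtain E :: "nat \<Rightarrow> int" where E0: "\<forall>k. T k = 2 powr E k" by blast
  have E: "T k = 2 powr E k" for k using E0 by blast
  have Edec: "E (Suc k) < E k" for k
  proof -
    have "T (Suc k) < T k" using O1[of "Suc k"] O1[of k] by linarith
    then have "(2::real) powr E (Suc k) < 2 powr E k" unfolding E .
    then show ?thesis by (simp only: powr_less_cancel_iff one_less_numeral_iff semiring_norm(76) of_int_less_iff)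
  qed
  have Ele: "E k \<le> E 0 - int k" for k
  proof (induction k)
    case 0 then show ?case by simp
  next
    case (Suc k) then show ?case using Edec[of k] by simp
  qed
  define C where "C = (2::real) powr E 0"
  have C0: "C > 0" by (simp add: C_def)
  have Tle: "T k \<le> C * (1/2) ^ k" for k
  proof -
    have "real_of_int (E k) \<le> real_of_int (E 0 - int k)" using Ele[of k] by (simp only: of_int_le_iff)
    then have "T k \<le> 2 powr (real_of_int (E 0 - int k))"
      unfolding E by (rule powr_mono) simp
    also have "real_of_int (E 0 - int k) = real_of_int (E 0) - real k" by simp
    also have "(2::real) powr (real_of_int (E 0) - real k) = C / 2 powr real k"
      unfolding C_def by (rule powr_diff)
    also have "(2::real) powr real k = 2 ^ k" by (rule powr_realpow) simp
    also have "C / 2 ^ k = C * (1/2) ^ k" by (simp add: power_one_over)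
    finally show ?thesis .
  qed
  have B0: "B \<ge> 0" by (simp add: B_def)
  have nb: "norm (X (Suc k) - X k) \<le> B * C * (1/2) ^ k" for k
  proof -
    have "norm (X (Suc k) - X k) = T k * B" using O1[of k] by blast
    also have "\<dots> \<le> (C * (1/2) ^ k) * B" using Tle[of k] B0 by (rule mult_right_mono)
    finally show ?thesis by (simp add: ac_simps)
  qed
  have sg: "summable (\<lambda>k. B * C * (1/2::real) ^ k)"
    by (intro summable_mult summable_geometric) simp
  have sm: "summable (\<lambda>k. X (Suc k) - X k)"
    by (rule summable_comparison_test[OF _ sg]) (use nb in auto)
  have "(\<lambda>n. \<Sum>i<n. X (Suc i) - X i) \<longlonglongrightarrow> suminf (\<lambda>k. X (Suc k) - X k)"
    by (rule summable_LIMSEQ[OF sm])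
  then have "(\<lambda>n. X n - X 0) \<longlonglongrightarrow> suminf (\<lambda>k. X (Suc k) - X k)"
    by (simp add: sum_lessThan_telescope)
  then have lim: "X \<longlonglongrightarrow> X 0 + suminf (\<lambda>k. X (Suc k) - X k)"
    using tendsto_add[OF tendsto_const[of "X 0"]] by fastforce
  define xbar where "xbar = X 0 + suminf (\<lambda>k. X (Suc k) - X k)"
  have l1: "(\<lambda>k. X k $ j) \<longlonglongrightarrow> xbar $ j"
    using lim unfolding xbar_def by (rule tendsto_vec_nth)
  have l2: "(\<lambda>k. X k $ j) \<longlonglongrightarrow> 0"
  proof (rule Lim_null_comparison)
    show "\<forall>\<^sub>F k in sequentially. norm (X k $ j) \<le> a * C * (1/2) ^ k"
    proof (intro always_eventually allI)
      fix k
      have "\<bar>X k $ j\<bar> = a * R k" using a by (simp add: R_def)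
      also have "\<dots> \<le> a * T k" using O1(1)[of k] a by simp
      also have "\<dots> \<le> a * (C * (1/2) ^ k)" using Tle[of k] a by simp
      finally show "norm (X k $ j) \<le> a * C * (1/2) ^ k" by (simp add: ac_simps)
    qed
    show "(\<lambda>k. a * C * (1/2::real) ^ k) \<longlonglongrightarrow> 0"
      by (intro tendsto_mult_right_zero LIMSEQ_power_zero) simp
  qed
  have "xbar $ j = 0" using LIMSEQ_unique[OF l1 l2] .
  then show ?thesis using O lim unfolding X_def xbar_def by blast
qed


theorem corollary2:
  fixes a c1 c2 :: real and j :: "'n::finite"
  assumes "CARD('n) \<ge> 2"
    and "a \<ge> sqrt (real CARD('n) - 1)"
    and "0 < c1" and "c1 < c2" and "c2 < 1"
    and "c1 + (real CARD('n) - 1) * (c1 - 1) / a\<^sup>2 = 0"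
  shows "AE x0 in (std_gaussian :: (real^'n) measure).
           (\<forall>k. fobj a j differentiable (at (gd_iter (fobj a j) c1 c2 x0 k)) \<and>
                ls_terminates (fobj a j) c1 c2 (gd_iter (fobj a j) c1 c2 x0 k)
                   (- grad (fobj a j) (gd_iter (fobj a j) c1 c2 x0 k))) \<and>
           (\<exists>xbar. gd_iter (fobj a j) c1 c2 x0 \<longlonglongrightarrow> xbar \<and> xbar $ j = 0)"
proof -
  let ?N = "real CARD('n) - 1"
  have N1: "?N \<ge> 1" using assms(1) by simp
  have sq: "sqrt ?N \<ge> 1" using N1 by simp
  have a: "a > 0" using assms(2) sq by linarith
  have "sqrt ?N * sqrt ?N \<le> a * a" using assms(2) sq a by (intro mult_mono) auto
  then have aN: "a * a \<ge> ?N" using N1 by simp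
  have "c1 * a\<^sup>2 + ?N * (c1 - 1) = 0"
    using assms(6) a by (simp add: field_simps)
  then have c1: "c1 * (a * a + ?N) = ?N" by (simp add: algebra_simps power2_eq_square)
  have c2: "0 < c2" "c2 < 1" using assms(3-5) by auto
  show ?thesis
    using ae_part[of j a]
    by (rule AE_mp) (intro AE_I2 impI det_part[OF a c1 aN c2])
qed

end
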